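(* Let $g\ge1$, $0\le g'<g$, $g''=g-g'$, and fix Siegel sets $\mathfrak{F}_g(u)\subset\mathfrak{S}_g$, $\mathfrak{F}_{g'}(u)\subset\mathfrak{S}_{g'}$, $\mathfrak{F}^+_{g''}(u)\subset\mathrm{Sym}^+(g'',\mathbb{R})$. Let $(\tau',t)\in\mathfrak{F}_{g'}(u)\times\mathfrak{F}^+_{g''}(u)$ be fixed, and let $V=V_X+iV_Y\in T_\tau\mathfrak{S}_g$ be a vertical tangent vector (i.e. $d\pi_{g'}(V)=0$) at a point $\tau\in\pi_{g'}^{-1}(\tau',t)\cap\mathfrak{F}_g(u)$. Then $$\|V\|_\tau^2=\operatorname{tr}\big(t^{-1}\,{}^tV'''_X(Y')^{-1}V'''_X\big)+\operatorname{tr}\big(t^{-1}\,{}^tV'''_Y(Y')^{-1}V'''_Y\big)+\tfrac12\operatorname{tr}\big(t^{-1}\tilde V''_X\,t^{-1}\tilde V''_X\big),$$ where $\tilde V''_X:=V''_X-{}^tV'''_X(Y')^{-1}Y'''-{}^tY'''(Y')^{-1}V'''_X\in\mathrm{Sym}(g'',\mathbb{R})$.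
   Context: $\mathfrak{S}_g=\{\tau\in\mathrm{Sym}(g,\mathbb{C}):\operatorname{Im}\tau>0\}$, $\tau=X+iY$. The Weil–Petersson norm of $V=V_X+iV_Y\in\mathrm{Sym}(g,\mathbb{C})\cong T_\tau\mathfrak{S}_g$ is $\|V\|_\tau^2=\frac12\big(\operatorname{tr}(Y^{-1}V_XY^{-1}V_X)+\operatorname{tr}(Y^{-1}V_YY^{-1}V_Y)\big)$. Block decompositions: $\tau=\begin{pmatrix}\tau'&\tau'''\\{}^t\tau'''&\tau''\end{pmatrix}$ with $\tau'$ of size $g'\times g'$ and $\tau''$ of size $g''\times g''$; the same for $X,Y,V_X,V_Y$ (blocks $V'_X,V'''_X,V''_X$, etc.). The map $\pi_{g'}:\mathfrak{S}_g\to\mathfrak{S}_{g'}\times\mathrm{Sym}^+(g'',\mathbb{R})$ is $\pi_{g'}(\tau)=(\tau',\,Y''-{}^tY'''(Y')^{-1}Y''')$. Jacobi decomposition $Y=LDL^t$, $L=(l_{ij})$ lower triangular unipotent, $D=\mathrm{diag}(d_1,\dots,d_g)$; Siegel sets $\mathfrak{F}_g(u)=\{X+iY: |x_{ij}|<u,\ |l_{ij}|<u,\ 1<ud_1,\ d_i<ud_{i+1}\}$ and $\mathfrak{F}^+_g(u)=\{Y\in\mathrm{Sym}^+(g,\mathbb{R}): |l_{ij}|<u,\ 1<ud_1,\ d_i<ud_{i+1}\}$. *)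

theory Defs
  imports "Jordan_Normal_Form.Gauss_Jordan_Elimination"
begin

(* Real n x n matrices are JNF matrices in carrier_mat n n.
   A point tau = X + iY of the Siegel space is represented by the pair (X, Y),
   a tangent vector V = V_X + i V_Y by the pair (V_X, V_Y). *)

definition sym_mat :: "nat \<Rightarrow> real mat \<Rightarrow> bool" where
  "sym_mat n A \<longleftrightarrow> A \<in> carrier_mat n n \<and> transpose_mat A = A"

definition pos_def_mat :: "nat \<Rightarrow> real mat \<Rightarrow> bool" where
  "pos_def_mat n A \<longleftrightarrow> sym_mat n A \<and>
     (\<forall>v \<in> carrier_vec n. v \<noteq> 0\<^sub>v n \<longrightarrow> v \<bullet> (A *\<^sub>v v) > 0)"

definition mtrace :: "real mat \<Rightarrow> real" where
  "mtrace A = (\<Sum>i<dim_row A. A $$ (i, i))"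

definition minv :: "real mat \<Rightarrow> real mat" where
  "minv A = the (mat_inverse A)"

definition siegel_space :: "nat \<Rightarrow> (real mat \<times> real mat) set" where
  "siegel_space g = {(X, Y). sym_mat g X \<and> pos_def_mat g Y}"

definition sym_complex :: "nat \<Rightarrow> (real mat \<times> real mat) set" where
  "sym_complex g = {(VX, VY). sym_mat g VX \<and> sym_mat g VY}"

definition wp_norm_sq :: "real mat \<times> real mat \<Rightarrow> real mat \<times> real mat \<Rightarrow> real" where
  "wp_norm_sq \<tau> V = (case \<tau> of (X, Y) \<Rightarrow> case V of (VX, VY) \<Rightarrow>
     (1/2) * (mtrace (minv Y * VX * minv Y * VX) + mtrace (minv Y * VY * minv Y * VY)))"

(* blocks A' (top-left g' x g'), A''' (top-right g' x g''), A'' (bottom-right g'' x g'') *)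
definition blk1 :: "nat \<Rightarrow> real mat \<Rightarrow> real mat" where
  "blk1 g' A = (case split_block A g' g' of (A1, A2, A3, A4) \<Rightarrow> A1)"
definition blk3 :: "nat \<Rightarrow> real mat \<Rightarrow> real mat" where
  "blk3 g' A = (case split_block A g' g' of (A1, A2, A3, A4) \<Rightarrow> A2)"
definition blk2 :: "nat \<Rightarrow> real mat \<Rightarrow> real mat" where
  "blk2 g' A = (case split_block A g' g' of (A1, A2, A3, A4) \<Rightarrow> A4)"

definition pi_map :: "nat \<Rightarrow> real mat \<times> real mat \<Rightarrow> (real mat \<times> real mat) \<times> real mat" where
  "pi_map g' \<tau> = (case \<tau> of (X, Y) \<Rightarrow>
     ((blk1 g' X, blk1 g' Y),
      blk2 g' Y - transpose_mat (blk3 g' Y) * minv (blk1 g' Y) * blk3 g' Y))"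

definition vertical :: "nat \<Rightarrow> nat \<Rightarrow> real mat \<times> real mat \<Rightarrow> real mat \<times> real mat \<Rightarrow> bool" where
  "vertical g g' \<tau> V \<longleftrightarrow> (case \<tau> of (X, Y) \<Rightarrow> case V of (VX, VY) \<Rightarrow>
     let p = (\<lambda>s::real. pi_map g' (X + s \<cdot>\<^sub>m VX, Y + s \<cdot>\<^sub>m VY)) in
     (\<forall>i<g'. \<forall>j<g'. ((\<lambda>s. fst (fst (p s)) $$ (i, j)) has_real_derivative 0) (at 0)) \<and>
     (\<forall>i<g'. \<forall>j<g'. ((\<lambda>s. snd (fst (p s)) $$ (i, j)) has_real_derivative 0) (at 0)) \<and>
     (\<forall>i<g - g'. \<forall>j<g - g'. ((\<lambda>s. snd (p s) $$ (i, j)) has_real_derivative 0) (at 0)))"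

definition jacobi_decomp :: "nat \<Rightarrow> real mat \<Rightarrow> real mat \<Rightarrow> real mat \<Rightarrow> bool" where
  "jacobi_decomp n Y L D \<longleftrightarrow> L \<in> carrier_mat n n \<and> D \<in> carrier_mat n n \<and>
     (\<forall>i<n. L $$ (i, i) = 1) \<and> (\<forall>i<n. \<forall>j<n. i < j \<longrightarrow> L $$ (i, j) = 0) \<and>
     diagonal_mat D \<and> Y = L * D * transpose_mat L"

(* Jacobi conditions (0-based indices: d_1 is D$$(0,0)) *)
definition jacobi_bounds :: "nat \<Rightarrow> real \<Rightarrow> real mat \<Rightarrow> real mat \<Rightarrow> bool" where
  "jacobi_bounds n u L D \<longleftrightarrow>
     (\<forall>i<n. \<forall>j<i. \<bar>L $$ (i, j)\<bar> < u) \<and>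
     (0 < n \<longrightarrow> 1 < u * D $$ (0, 0)) \<and>
     (\<forall>i. i + 1 < n \<longrightarrow> D $$ (i, i) < u * D $$ (i + 1, i + 1))"

definition siegel_set :: "nat \<Rightarrow> real \<Rightarrow> (real mat \<times> real mat) set" where
  "siegel_set g u = {(X, Y). (X, Y) \<in> siegel_space g \<and>
     (\<forall>i<g. \<forall>j<g. \<bar>X $$ (i, j)\<bar> < u) \<and>
     (\<exists>L D. jacobi_decomp g Y L D \<and> jacobi_bounds g u L D)}"

definition siegel_set_plus :: "nat \<Rightarrow> real \<Rightarrow> real mat set" where
  "siegel_set_plus g u = {Y. pos_def_mat g Y \<and>
     (\<exists>L D. jacobi_decomp g Y L D \<and> jacobi_bounds g u L D)}"

end

theory Submission
  imports Defs "Jordan_Normal_Form.Determinant"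
begin

lemma sum_split_add: "(\<Sum>i<k+m. (f::nat\<Rightarrow>real) i) = (\<Sum>i<k. f i) + (\<Sum>i<m. f (k+i))"
  by (induct m) simp_all


lemma mtrace_comm:
  fixes A B :: "real mat"
  assumes "A \<in> carrier_mat n m" "B \<in> carrier_mat m n"
  shows "mtrace (A * B) = mtrace (B * A)"
proof -
  have "mtrace (A * B) = (\<Sum>i<n. \<Sum>j<m. A $$ (i,j) * B $$ (j,i))"
    using assms by (simp add: mtrace_def scalar_prod_def atLeast0LessThan)
  also have "\<dots> = (\<Sum>j<m. \<Sum>i<n. B $$ (j,i) * A $$ (i,j))"
    by (subst sum.swap) (simp add: mult.commute)
  also have "\<dots> = mtrace (B * A)"
    using assms by (simp add: mtrace_def scalar_prod_def atLeast0LessThan)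
  finally show ?thesis .
qed

lemma mtrace_four_block:
  fixes A D :: "real mat"
  assumes "A \<in> carrier_mat k k" "D \<in> carrier_mat m m"
  shows "mtrace (four_block_mat A B C D) = mtrace A + mtrace D"
proof -
  have "mtrace (four_block_mat A B C D) = (\<Sum>i<k+m. four_block_mat A B C D $$ (i,i))"
    using assms by (simp add: mtrace_def)
  also have "\<dots> = (\<Sum>i<k. four_block_mat A B C D $$ (i,i)) + (\<Sum>i<m. four_block_mat A B C D $$ (k+i,k+i))"
    by (rule sum_split_add)
  also have "\<dots> = mtrace A + mtrace D"
    using assms by (simp add: mtrace_def)
  finally show ?thesis .
qed

lemma mtrace_add:
  fixes A B :: "real mat"
  assumes "A \<in> carrier_mat n n" "B \<in> carrier_mat n n"
  shows "mtrace (A + B) = mtrace A + mtrace B"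
  using assms by (simp add: mtrace_def sum.distrib)

lemma mtrace_zero: "mtrace (0\<^sub>m n n) = 0"
  by (simp add: mtrace_def)

lemma pos_def_inv:
  assumes "pos_def_mat n A"
  shows "minv A \<in> carrier_mat n n \<and> A * minv A = 1\<^sub>m n \<and> minv A * A = 1\<^sub>m n"
proof -
  have A: "A \<in> carrier_mat n n" using assms by (simp add: pos_def_mat_def sym_mat_def)
  have "det A \<noteq> 0"
  proof
    assume "det A = 0"
    then obtain v where v: "v \<in> carrier_vec n" "v \<noteq> 0\<^sub>v n" "A *\<^sub>v v = 0\<^sub>v n"
      using det_0_iff_vec_prod_zero_field[OF A] by blast
    have "v \<bullet> (A *\<^sub>v v) > 0" using assms v(1,2) unfolding pos_def_mat_def by blast
    moreover have "v \<bullet> (A *\<^sub>v v) = 0" using v(1,3) by simp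
    ultimately show False by simp
  qed
  then have U: "A \<in> Units (ring_mat TYPE(real) n undefined)" by (rule det_non_zero_imp_unit[OF A])
  have "mat_inverse A \<noteq> None" using mat_inverse(1)[OF A, of undefined] U by blast
  then obtain B where B: "mat_inverse A = Some B" by auto
  from mat_inverse(2)[OF A B] show ?thesis using B by (simp add: minv_def)
qed

lemma inv_sym:
  fixes A Ai :: "real mat"
  assumes A: "A \<in> carrier_mat n n" and Ai: "Ai \<in> carrier_mat n n" and "transpose_mat A = A"
    and "A * Ai = 1\<^sub>m n" and "Ai * A = 1\<^sub>m n"
  shows "transpose_mat Ai = Ai"
proof -
  have "transpose_mat Ai * A = 1\<^sub>m n"
    using transpose_mult[OF A Ai] assms by simp
  have "transpose_mat Ai = transpose_mat Ai * (A * Ai)" using assms by simp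
  also have "\<dots> = (transpose_mat Ai * A) * Ai" using assms by simp
  also have "\<dots> = Ai" using assms \<open>transpose_mat Ai * A = 1\<^sub>m n\<close> by simp
  finally show ?thesis .
qed

lemma sq_mult: "A \<in> carrier_mat n n \<Longrightarrow> B \<in> carrier_mat n n \<Longrightarrow> A * B \<in> carrier_mat n n"
  by simp

lemma assoc_sq: "A \<in> carrier_mat n n \<Longrightarrow> B \<in> carrier_mat n n \<Longrightarrow> C \<in> carrier_mat n n \<Longrightarrow> A * B * C = A * (B * C)"
  by simp


lemma block_trace:
  fixes A Ai B C t ti W Z Yi :: "real mat"
  assumes A: "A \<in> carrier_mat k k" and Ai: "Ai \<in> carrier_mat k k"
    and AAi: "A * Ai = 1\<^sub>m k" and AiA: "Ai * A = 1\<^sub>m k" and AiT: "transpose_mat Ai = Ai"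
    and B: "B \<in> carrier_mat k m" and C: "C \<in> carrier_mat m m"
    and t: "t = C - transpose_mat B * Ai * B" and ti: "ti \<in> carrier_mat m m"
    and tti: "t * ti = 1\<^sub>m m"
    and W: "W \<in> carrier_mat k m" and Z: "Z \<in> carrier_mat m m"
    and Yi: "Yi \<in> carrier_mat (k+m) (k+m)"
    and YiY: "Yi * four_block_mat A B (transpose_mat B) C = 1\<^sub>m (k+m)"
  shows "mtrace (Yi * four_block_mat (0\<^sub>m k k) W (transpose_mat W) Z * Yi * four_block_mat (0\<^sub>m k k) W (transpose_mat W) Z)
     = 2 * mtrace (ti * transpose_mat W * Ai * W)
       + mtrace (ti * (Z - transpose_mat W * Ai * B - transpose_mat B * Ai * W) * ti *
                      (Z - transpose_mat W * Ai * B - transpose_mat B * Ai * W))"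
proof -
  define Y where "Y = four_block_mat A B (transpose_mat B) C"
  define V where "V = four_block_mat (0\<^sub>m k k) W (transpose_mat W) Z"
  define Zt where "Zt = Z - transpose_mat W * Ai * B - transpose_mat B * Ai * W"
  define Q where "Q = four_block_mat (1\<^sub>m k) (- (Ai * B)) (0\<^sub>m m k) (1\<^sub>m m)"
  define QT where "QT = four_block_mat (1\<^sub>m k) (0\<^sub>m k m) (- (transpose_mat B * Ai)) (1\<^sub>m m)"
  define D where "D = four_block_mat Ai (0\<^sub>m k m) (0\<^sub>m m k) ti"
  note dims = carrier_matD[OF A] carrier_matD[OF Ai] carrier_matD[OF B] carrier_matD[OF C]
    carrier_matD[OF ti] carrier_matD[OF W] carrier_matD[OF Z]
  have Bt: "transpose_mat B \<in> carrier_mat m k" using B by simp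
  have Wt: "transpose_mat W \<in> carrier_mat m k" using W by simp
  have tc: "t \<in> carrier_mat m m" using t B C Ai by auto
  have Ztc: "Zt \<in> carrier_mat m m" using Zt_def W B Z Ai by auto
  have Yc: "Y \<in> carrier_mat (k+m) (k+m)" using Y_def A C by simp
  have Vc: "V \<in> carrier_mat (k+m) (k+m)" using V_def Z by simp
  have Qc: "Q \<in> carrier_mat (k+m) (k+m)" using Q_def by simp
  have QTc: "QT \<in> carrier_mat (k+m) (k+m)" using QT_def by simp
  have Dc: "D \<in> carrier_mat (k+m) (k+m)" using D_def Ai ti by simp
  have AiB: "Ai * B \<in> carrier_mat k m" using Ai B by simp
  have BtAi: "transpose_mat B * Ai \<in> carrier_mat m k" using Ai B by simp
  have mAiB: "- (Ai * B) \<in> carrier_mat k m" using AiB by simp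
  have mBtAi: "- (transpose_mat B * Ai) \<in> carrier_mat m k" using BtAi by simp
  have AAiB: "A * (Ai * B) = B" using assoc_mult_mat[OF A Ai B, symmetric] AAi B by simp
  have QT_eq: "transpose_mat Q = QT"
    unfolding Q_def QT_def
    by (subst transpose_four_block_mat[of _ k k _ m _ m]) (use Ai B AiT in \<open>auto simp: transpose_uminus transpose_mult[OF Ai B]\<close>)
  have YQ: "Y * Q = four_block_mat A (0\<^sub>m k m) (transpose_mat B) t"
    unfolding Y_def Q_def
    apply (subst mult_four_block_mat[OF A B Bt C one_carrier_mat mAiB zero_carrier_mat one_carrier_mat])
    apply (rule cong_four_block_mat)
    using A B C Ai AAiB apply simp
    using A B C Ai AAiB apply simp
    using A B C Ai AAiB apply simp
    using A B C Ai AAiB t apply (simp add: dims)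
    apply (rule eq_matI) apply (simp_all add: dims)
    done
  have YQD: "Y * Q * D = four_block_mat (1\<^sub>m k) (0\<^sub>m k m) (transpose_mat B * Ai) (1\<^sub>m m)"
    unfolding YQ D_def
    apply (subst mult_four_block_mat[OF A zero_carrier_mat Bt tc Ai zero_carrier_mat zero_carrier_mat ti])
    apply (rule cong_four_block_mat)
    using A B C Ai AAi tc ti tti apply simp_all
    done
  have YQDQT: "Y * Q * D * QT = 1\<^sub>m (k+m)"
    unfolding YQD QT_def
    apply (subst mult_four_block_mat[OF one_carrier_mat zero_carrier_mat BtAi one_carrier_mat one_carrier_mat zero_carrier_mat mBtAi one_carrier_mat])
    apply (subst four_block_one_mat[symmetric])
    apply (rule cong_four_block_mat)
    using BtAi apply (simp_all add: dims)
    apply (auto intro!: eq_matI simp: dims)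
    done
  have Yi_eq: "Yi = Q * D * QT"
  proof -
    have "Yi = Yi * (Y * Q * D * QT)" using YQDQT Yi by simp
    also have "\<dots> = (Yi * Y) * (Q * D * QT)" using Yi Yc Qc Dc QTc by (simp add: assoc_sq[where n="k+m"] sq_mult)
    also have "\<dots> = Q * D * QT" using YiY Y_def Qc Dc QTc by simp
    finally show ?thesis .
  qed
  define U where "U = QT * V * Q"
  have VQ: "V * Q = four_block_mat (0\<^sub>m k k) W (transpose_mat W) (- (transpose_mat W * (Ai * B)) + Z)"
    unfolding V_def Q_def
    apply (subst mult_four_block_mat[OF zero_carrier_mat W Wt Z one_carrier_mat mAiB zero_carrier_mat one_carrier_mat])
    apply (rule cong_four_block_mat)
    subgoal by (rule eq_matI) (simp_all add: dims)
    subgoal by (rule eq_matI) (simp_all add: dims)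
    subgoal by (rule eq_matI) (simp_all add: dims)
    subgoal using W Ai B Z by (simp add: dims)
    done
  have Z'c: "- (transpose_mat W * (Ai * B)) + Z \<in> carrier_mat m m" using W Ai B Z by simp
  have U_eq: "U = four_block_mat (0\<^sub>m k k) W (transpose_mat W) Zt"
  proof -
    have "U = QT * (V * Q)" unfolding U_def using QTc Vc Qc by simp
    also have "\<dots> = four_block_mat (0\<^sub>m k k) W (transpose_mat W) Zt"
      unfolding VQ QT_def
      apply (subst mult_four_block_mat[OF one_carrier_mat zero_carrier_mat mBtAi one_carrier_mat zero_carrier_mat W Wt Z'c])
      apply (rule cong_four_block_mat)
      subgoal by (rule eq_matI) (simp_all add: dims)
      subgoal by (rule eq_matI) (simp_all add: dims)
      subgoal by (rule eq_matI) (simp_all add: dims)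
      subgoal unfolding Zt_def using W Ai B Z apply (simp add: dims)
        by (rule eq_matI) (simp_all add: dims)
      done
    finally show ?thesis .
  qed
  have Uc: "U \<in> carrier_mat (k+m) (k+m)" using U_eq Ztc by simp
  have "mtrace (Yi * V * Yi * V) = mtrace (Q * (D * QT * V * Q * D * QT * V))"
    unfolding Yi_eq using Qc Dc QTc Vc by (simp add: assoc_sq[where n="k+m"] sq_mult)
  also have "\<dots> = mtrace ((D * QT * V * Q * D * QT * V) * Q)"
    by (rule mtrace_comm[of _ "k+m" "k+m"]) (use Qc Dc QTc Vc in \<open>simp_all add: sq_mult\<close>)
  also have "\<dots> = mtrace ((D * U) * (D * U))"
    unfolding U_def using Qc Dc QTc Vc by (simp add: assoc_sq[where n="k+m"] sq_mult)
  finally have tr1: "mtrace (Yi * V * Yi * V) = mtrace ((D * U) * (D * U))" .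
  have DU: "D * U = four_block_mat (0\<^sub>m k k) (Ai * W) (ti * transpose_mat W) (ti * Zt)"
    unfolding U_eq D_def
    apply (subst mult_four_block_mat[OF Ai zero_carrier_mat zero_carrier_mat ti zero_carrier_mat W Wt Ztc])
    apply (rule cong_four_block_mat)
    using Ai ti W Ztc apply simp_all
    done
  have AiW: "Ai * W \<in> carrier_mat k m" using Ai W by simp
  have tiWt: "ti * transpose_mat W \<in> carrier_mat m k" using ti W by simp
  have tiZt: "ti * Zt \<in> carrier_mat m m" using ti Ztc by simp
  have c1: "Ai * W * (ti * transpose_mat W) \<in> carrier_mat k k" using mult_carrier_mat[OF AiW tiWt] .
  have c2: "ti * transpose_mat W * (Ai * W) \<in> carrier_mat m m" using mult_carrier_mat[OF tiWt AiW] .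
  have c3: "ti * Zt * (ti * Zt) \<in> carrier_mat m m" using mult_carrier_mat[OF tiZt tiZt] .
  have DUDU: "(D * U) * (D * U) = four_block_mat (Ai * W * (ti * transpose_mat W)) (Ai * W * (ti * Zt))
      (ti * Zt * (ti * transpose_mat W)) (ti * transpose_mat W * (Ai * W) + ti * Zt * (ti * Zt))"
  proof -
    show ?thesis
    unfolding DU
    apply (subst mult_four_block_mat[OF zero_carrier_mat AiW tiWt tiZt zero_carrier_mat AiW tiWt tiZt])
    apply (rule cong_four_block_mat)
    subgoal by (rule eq_matI) (simp_all add: dims carrier_matD[OF Ztc])
    subgoal by (rule eq_matI) (simp_all add: dims carrier_matD[OF Ztc])
    subgoal by (rule eq_matI) (simp_all add: dims carrier_matD[OF Ztc])
    subgoal by (rule refl)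
    done
  qed
  have "mtrace ((D * U) * (D * U)) = mtrace (Ai * W * (ti * transpose_mat W)) + 
     (mtrace (ti * transpose_mat W * (Ai * W)) + mtrace (ti * Zt * (ti * Zt)))"
    unfolding DUDU
    apply (subst mtrace_four_block[OF c1 add_carrier_mat[OF c3]])
    apply (subst mtrace_add[OF c2 c3])
    apply (rule refl)
    done
  also have "mtrace (Ai * W * (ti * transpose_mat W)) = mtrace (ti * transpose_mat W * (Ai * W))"
    by (rule mtrace_comm[of _ k m]) (use Ai ti W in simp_all)
  finally have tr2: "mtrace ((D * U) * (D * U)) = 2 * mtrace (ti * transpose_mat W * (Ai * W)) + mtrace (ti * Zt * (ti * Zt))"
    by simp
  have e1: "ti * transpose_mat W * Ai * W = ti * transpose_mat W * (Ai * W)"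
    using ti W Ai by (simp only: assoc_mult_mat[OF tiWt Ai W] )
  have e2: "ti * Zt * ti * Zt = ti * Zt * (ti * Zt)"
    by (rule assoc_mult_mat[OF tiZt ti Ztc])
  show ?thesis
    unfolding V_def[symmetric] Zt_def[symmetric] e1 e2 tr1 tr2 by (rule refl)
qed

lemma blk_dims[simp]:
  "dim_row (blk1 k M) = k" "dim_col (blk1 k M) = k"
  "dim_row (blk3 k M) = k" "dim_col (blk3 k M) = dim_col M - k"
  "dim_row (blk2 k M) = dim_row M - k" "dim_col (blk2 k M) = dim_col M - k"
  by (simp_all add: blk1_def blk2_def blk3_def split_block_def Let_def)

lemma blk_index:
  "i < k \<Longrightarrow> j < k \<Longrightarrow> blk1 k M $$ (i,j) = M $$ (i,j)"
  "i < k \<Longrightarrow> j < dim_col M - k \<Longrightarrow> blk3 k M $$ (i,j) = M $$ (i,j+k)"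
  "i < dim_row M - k \<Longrightarrow> j < dim_col M - k \<Longrightarrow> blk2 k M $$ (i,j) = M $$ (i+k,j+k)"
  by (simp_all add: blk1_def blk2_def blk3_def split_block_def Let_def)

lemma sym_block:
  assumes "sym_mat n M" "k \<le> n"
  shows "M = four_block_mat (blk1 k M) (blk3 k M) (transpose_mat (blk3 k M)) (blk2 k M)"
proof -
  have M: "M \<in> carrier_mat n n" and T: "transpose_mat M = M" using assms by (auto simp: sym_mat_def)
  have symM: "M $$ (i,j) = M $$ (j,i)" if "i < n" "j < n" for i j
    using that M by (metis T carrier_matD(1) carrier_matD(2) index_transpose_mat(1))
  show ?thesis
    apply (rule eq_matI)
    using M assms(2) by (auto simp: blk_index symM)
qed

lemma triple_entry:
  fixes P Ai R :: "real mat"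
  assumes "P \<in> carrier_mat k m" "Ai \<in> carrier_mat k k" "R \<in> carrier_mat k m'" "i < m" "j < m'"
  shows "(transpose_mat P * Ai * R) $$ (i,j) = (\<Sum>l<k. (\<Sum>l'<k. P $$ (l',i) * Ai $$ (l',l)) * R $$ (l,j))"
  using assms by (simp add: scalar_prod_def atLeast0LessThan del: assoc_mult_mat)

theorem lemma3p12:
  fixes g g' :: nat and u :: real and \<tau>' :: "real mat \<times> real mat" and t :: "real mat"
    and X Y VX VY :: "real mat"
  assumes "1 \<le> g" and "g' < g"
    and "\<tau>' \<in> siegel_set g' u"
    and "t \<in> siegel_set_plus (g - g') u"
    and "(X, Y) \<in> siegel_set g u"
    and "pi_map g' (X, Y) = (\<tau>', t)"
    and "(VX, VY) \<in> sym_complex g"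
    and "vertical g g' (X, Y) (VX, VY)"
  shows "wp_norm_sq (X, Y) (VX, VY) =
      mtrace (minv t * transpose_mat (blk3 g' VX) * minv (blk1 g' Y) * blk3 g' VX)
    + mtrace (minv t * transpose_mat (blk3 g' VY) * minv (blk1 g' Y) * blk3 g' VY)
    + (1/2) * mtrace (minv t *
          (blk2 g' VX - transpose_mat (blk3 g' VX) * minv (blk1 g' Y) * blk3 g' Y
             - transpose_mat (blk3 g' Y) * minv (blk1 g' Y) * blk3 g' VX)
        * minv t *
          (blk2 g' VX - transpose_mat (blk3 g' VX) * minv (blk1 g' Y) * blk3 g' Y
             - transpose_mat (blk3 g' Y) * minv (blk1 g' Y) * blk3 g' VX))"
proof -
  define k where "k = g'"
  define m where "m = g - g'"
  have gkm: "g = k + m" using assms(2) by (simp add: k_def m_def)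
  have sp: "(X, Y) \<in> siegel_space g" using assms(5) unfolding siegel_set_def by blast
  have Ypd: "pos_def_mat g Y" and Xs: "sym_mat g X"
    using sp unfolding siegel_space_def by blast+
  have Ys: "sym_mat g Y" using Ypd unfolding pos_def_mat_def by blast
  have VXs: "sym_mat g VX" and VYs: "sym_mat g VY" using assms(7) unfolding sym_complex_def by blast+
  have Yc: "Y \<in> carrier_mat g g" using Ys unfolding sym_mat_def by blast
  have Xc: "X \<in> carrier_mat g g" using Xs unfolding sym_mat_def by blast
  have VXc: "VX \<in> carrier_mat g g" using VXs unfolding sym_mat_def by blast
  have VYc: "VY \<in> carrier_mat g g" using VYs unfolding sym_mat_def by blast
  define A where "A = blk1 k Y"
  define B where "B = blk3 k Y"
  define C where "C = blk2 k Y"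
  define Ai where "Ai = minv A"
  define WX where "WX = blk3 k VX"
  define ZX where "ZX = blk2 k VX"
  define WY where "WY = blk3 k VY"
  define ZY where "ZY = blk2 k VY"
  have Ac: "A \<in> carrier_mat k k" unfolding A_def by (intro carrier_matI) simp_all
  have Bc: "B \<in> carrier_mat k m" unfolding B_def using carrier_matD[OF Yc] gkm by (intro carrier_matI) simp_all
  have Cc: "C \<in> carrier_mat m m" unfolding C_def using carrier_matD[OF Yc] gkm by (intro carrier_matI) simp_all
  have WXc: "WX \<in> carrier_mat k m" unfolding WX_def using carrier_matD[OF VXc] gkm by (intro carrier_matI) simp_all
  have ZXc: "ZX \<in> carrier_mat m m" unfolding ZX_def using carrier_matD[OF VXc] gkm by (intro carrier_matI) simp_all
  have WYc: "WY \<in> carrier_mat k m" unfolding WY_def using carrier_matD[OF VYc] gkm by (intro carrier_matI) simp_all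
  have ZYc: "ZY \<in> carrier_mat m m" unfolding ZY_def using carrier_matD[OF VYc] gkm by (intro carrier_matI) simp_all
  have pm: "(\<tau>', t) = ((blk1 k X, A), C - transpose_mat B * Ai * B)"
    using assms(6) unfolding pi_map_def k_def A_def B_def C_def Ai_def by simp
  have tau': "\<tau>' = (blk1 k X, A)" and teq: "t = C - transpose_mat B * Ai * B"
    using prod.inject[THEN iffD1, OF pm] by blast+
  have "(blk1 k X, A) \<in> siegel_space g'"
    using assms(3) unfolding tau' siegel_set_def by blast
  then have Apd: "pos_def_mat k A" unfolding siegel_space_def k_def by blast
  have tpd: "pos_def_mat m t" using assms(4) unfolding siegel_set_plus_def m_def by blast
  have Ai: "Ai \<in> carrier_mat k k" "A * Ai = 1\<^sub>m k" "Ai * A = 1\<^sub>m k"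
    using pos_def_inv[OF Apd] by (auto simp: Ai_def)
  have AiT: "transpose_mat Ai = Ai"
    by (rule inv_sym[OF Ac Ai(1) _ Ai(2,3)]) (use Apd in \<open>simp add: pos_def_mat_def sym_mat_def\<close>)
  have ti: "minv t \<in> carrier_mat m m" "t * minv t = 1\<^sub>m m"
    using pos_def_inv[OF tpd] by auto
  have Yi: "minv Y \<in> carrier_mat (k+m) (k+m)" "minv Y * Y = 1\<^sub>m (k+m)"
    using pos_def_inv[OF Ypd] gkm by auto
  have Yblock: "Y = four_block_mat A B (transpose_mat B) C"
    unfolding A_def B_def C_def by (rule sym_block[OF Ys]) (simp add: gkm)
  have vert: "(\<forall>i<k. \<forall>j<k. ((\<lambda>s. blk1 k (X + s \<cdot>\<^sub>m VX) $$ (i, j)) has_real_derivative 0) (at 0)) \<and>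
     (\<forall>i<k. \<forall>j<k. ((\<lambda>s. blk1 k (Y + s \<cdot>\<^sub>m VY) $$ (i, j)) has_real_derivative 0) (at 0)) \<and>
     (\<forall>i<m. \<forall>j<m. ((\<lambda>s. (blk2 k (Y + s \<cdot>\<^sub>m VY) - transpose_mat (blk3 k (Y + s \<cdot>\<^sub>m VY)) *
          minv (blk1 k (Y + s \<cdot>\<^sub>m VY)) * blk3 k (Y + s \<cdot>\<^sub>m VY)) $$ (i, j)) has_real_derivative 0) (at 0))"
    using assms(8) by (simp add: vertical_def pi_map_def Let_def k_def m_def)
  have VX1: "VX $$ (i,j) = 0" if "i < k" "j < k" for i j
  proof -
    have eq: "(\<lambda>s. blk1 k (X + s \<cdot>\<^sub>m VX) $$ (i, j)) = (\<lambda>s. X $$ (i,j) + s * VX $$ (i,j))"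
      using that Xc VXc gkm by (auto simp: blk_index)
    have "((\<lambda>s. X $$ (i,j) + s * VX $$ (i,j)) has_real_derivative VX $$ (i,j)) (at 0)"
      by (auto intro!: derivative_eq_intros)
    moreover have "((\<lambda>s. X $$ (i,j) + s * VX $$ (i,j)) has_real_derivative 0) (at 0)"
      using vert that eq by metis
    ultimately show ?thesis by (rule DERIV_unique)
  qed
  have VY1: "VY $$ (i,j) = 0" if "i < k" "j < k" for i j
  proof -
    have eq: "(\<lambda>s. blk1 k (Y + s \<cdot>\<^sub>m VY) $$ (i, j)) = (\<lambda>s. Y $$ (i,j) + s * VY $$ (i,j))"
      using that Yc VYc gkm by (auto simp: blk_index)
    have "((\<lambda>s. Y $$ (i,j) + s * VY $$ (i,j)) has_real_derivative VY $$ (i,j)) (at 0)"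
      by (auto intro!: derivative_eq_intros)
    moreover have "((\<lambda>s. Y $$ (i,j) + s * VY $$ (i,j)) has_real_derivative 0) (at 0)"
      using vert that eq by metis
    ultimately show ?thesis by (rule DERIV_unique)
  qed
  have VXblock: "VX = four_block_mat (0\<^sub>m k k) WX (transpose_mat WX) ZX"
  proof -
    have "blk1 k VX = 0\<^sub>m k k" by (rule eq_matI) (auto simp: blk_index VX1)
    then show ?thesis using sym_block[OF VXs, of k] gkm unfolding WX_def ZX_def by simp
  qed
  have VYblock: "VY = four_block_mat (0\<^sub>m k k) WY (transpose_mat WY) ZY"
  proof -
    have "blk1 k VY = 0\<^sub>m k k" by (rule eq_matI) (auto simp: blk_index VY1)
    then show ?thesis using sym_block[OF VYs, of k] gkm unfolding WY_def ZY_def by simp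
  qed
  have blk1eq: "blk1 k (Y + s \<cdot>\<^sub>m VY) = A" for s
    unfolding A_def by (rule eq_matI) (use Yc VYc gkm in \<open>auto simp: blk_index VY1\<close>)
  have blk3c: "blk3 k (Y + s \<cdot>\<^sub>m VY) \<in> carrier_mat k m" for s
    using Yc VYc gkm by (intro carrier_matI) simp_all
  have blk3e: "blk3 k (Y + s \<cdot>\<^sub>m VY) $$ (l,i) = B $$ (l,i) + s * WY $$ (l,i)" if "l < k" "i < m" for s l i
    unfolding B_def WY_def using that Yc VYc gkm by (simp add: blk_index)
  have blk2e: "blk2 k (Y + s \<cdot>\<^sub>m VY) $$ (i,j) = C $$ (i,j) + s * ZY $$ (i,j)" if "i < m" "j < m" for s i j
    unfolding C_def ZY_def using that Yc VYc gkm by (simp add: blk_index)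
  have ZtY: "ZY - transpose_mat WY * Ai * B - transpose_mat B * Ai * WY = 0\<^sub>m m m"
  proof (rule eq_matI)
    fix i j assume "i < dim_row (0\<^sub>m m m :: real mat)" "j < dim_col (0\<^sub>m m m :: real mat)"
    then have i: "i < m" and j: "j < m" by auto
    define f where "f s = (blk2 k (Y + s \<cdot>\<^sub>m VY) - transpose_mat (blk3 k (Y + s \<cdot>\<^sub>m VY)) *
          minv (blk1 k (Y + s \<cdot>\<^sub>m VY)) * blk3 k (Y + s \<cdot>\<^sub>m VY)) $$ (i, j)" for s
    have f0: "(f has_real_derivative 0) (at 0)"
      using vert i j unfolding f_def by blast
    have feq: "f s = C $$ (i,j) + s * ZY $$ (i,j) - (\<Sum>l<k. (\<Sum>l'<k. (B $$ (l',i) + s * WY $$ (l',i)) * Ai $$ (l',l)) * (B $$ (l,j) + s * WY $$ (l,j)))" for s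
    proof -
      have "f s = blk2 k (Y + s \<cdot>\<^sub>m VY) $$ (i,j) - (transpose_mat (blk3 k (Y + s \<cdot>\<^sub>m VY)) * Ai * blk3 k (Y + s \<cdot>\<^sub>m VY)) $$ (i,j)"
        unfolding f_def blk1eq Ai_def[symmetric] using i j Yc VYc gkm by simp
      also have "\<dots> = C $$ (i,j) + s * ZY $$ (i,j) - (\<Sum>l<k. (\<Sum>l'<k. (B $$ (l',i) + s * WY $$ (l',i)) * Ai $$ (l',l)) * (B $$ (l,j) + s * WY $$ (l,j)))"
        unfolding triple_entry[OF blk3c Ai(1) blk3c i j] using i j by (simp add: blk2e blk3e)
      finally show ?thesis .
    qed
    define Dx where "Dx = ZY $$ (i,j) - (\<Sum>l<k. (\<Sum>l'<k. WY $$ (l',i) * Ai $$ (l',l)) * B $$ (l,j))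
        - (\<Sum>l<k. (\<Sum>l'<k. B $$ (l',i) * Ai $$ (l',l)) * WY $$ (l,j))"
    have "((\<lambda>s. C $$ (i,j) + s * ZY $$ (i,j) - (\<Sum>l<k. (\<Sum>l'<k. (B $$ (l',i) + s * WY $$ (l',i)) * Ai $$ (l',l)) * (B $$ (l,j) + s * WY $$ (l,j))))
       has_real_derivative Dx) (at 0)"
      unfolding Dx_def
      by (auto intro!: derivative_eq_intros simp: sum_subtractf[symmetric] sum.distrib[symmetric] algebra_simps)
    moreover have "f = (\<lambda>s. C $$ (i,j) + s * ZY $$ (i,j) - (\<Sum>l<k. (\<Sum>l'<k. (B $$ (l',i) + s * WY $$ (l',i)) * Ai $$ (l',l)) * (B $$ (l,j) + s * WY $$ (l,j))))"
      by (rule ext) (rule feq)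
    ultimately have "(f has_real_derivative Dx) (at 0)" by simp
    then have "Dx = 0" using f0 by (rule DERIV_unique)
    moreover have "(ZY - transpose_mat WY * Ai * B - transpose_mat B * Ai * WY) $$ (i,j) = Dx"
      unfolding Dx_def using i j ZYc WYc Bc Ai(1)
      by (simp add: triple_entry[OF WYc Ai(1) Bc i j] triple_entry[OF Bc Ai(1) WYc i j] del: assoc_mult_mat)
    ultimately show "(ZY - transpose_mat WY * Ai * B - transpose_mat B * Ai * WY) $$ (i,j) = 0\<^sub>m m m $$ (i,j)"
      using i j by simp
  next
    show "dim_row (ZY - transpose_mat WY * Ai * B - transpose_mat B * Ai * WY) = dim_row (0\<^sub>m m m :: real mat)"
      using ZYc Bc by simp
    show "dim_col (ZY - transpose_mat WY * Ai * B - transpose_mat B * Ai * WY) = dim_col (0\<^sub>m m m :: real mat)"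
      using ZYc Bc WYc Ai(1) by simp
  qed
  have trX: "mtrace (minv Y * VX * minv Y * VX) = 2 * mtrace (minv t * transpose_mat WX * Ai * WX)
       + mtrace (minv t * (ZX - transpose_mat WX * Ai * B - transpose_mat B * Ai * WX) * minv t *
                      (ZX - transpose_mat WX * Ai * B - transpose_mat B * Ai * WX))"
    unfolding VXblock
    by (rule block_trace[OF Ac Ai AiT Bc Cc teq ti WXc ZXc Yi(1)]) (use Yi Yblock in simp)
  have trY: "mtrace (minv Y * VY * minv Y * VY) = 2 * mtrace (minv t * transpose_mat WY * Ai * WY)"
  proof -
    have "mtrace (minv Y * VY * minv Y * VY) = 2 * mtrace (minv t * transpose_mat WY * Ai * WY)
       + mtrace (minv t * (ZY - transpose_mat WY * Ai * B - transpose_mat B * Ai * WY) * minv t *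
                      (ZY - transpose_mat WY * Ai * B - transpose_mat B * Ai * WY))"
      unfolding VYblock
      by (rule block_trace[OF Ac Ai AiT Bc Cc teq ti WYc ZYc Yi(1)]) (use Yi Yblock in simp)
    also have "mtrace (minv t * (ZY - transpose_mat WY * Ai * B - transpose_mat B * Ai * WY) * minv t *
                      (ZY - transpose_mat WY * Ai * B - transpose_mat B * Ai * WY)) = 0"
      unfolding ZtY using ti by (simp add: mtrace_zero)
    finally show ?thesis by simp
  qed
  show ?thesis
    unfolding wp_norm_sq_def using trX trY
    by (simp add: k_def[symmetric] A_def[symmetric] Ai_def[symmetric] B_def[symmetric]
        WX_def[symmetric] WY_def[symmetric] ZX_def[symmetric])
qed

end
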